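(* Let $p\ge1$ and let $\mathcal A=(A_n)_{n\ge0}$ be a sequence of positive invertible $p\times p$ matrices with $\sup_n\|A_n\|<\infty$ such that the matrix-valued weighted shift $W_{\mathcal A}$ on $\ell^2(\mathbb C^p)$ is quadratically hyponormal. If $A_n=A_{n+1}$ for some $n\ge1$, then either $A_{n-1}=A_n=A_{n+1}$ or $A_n=A_{n+1}=A_{n+2}$.
   Context: $\ell^2(\mathbb C^p)=\{(x_n)_{n\ge0}: x_n\in\mathbb C^p,\ \sum_n\|x_n\|^2<\infty\}$; the matrix-valued weighted shift is $W_{\mathcal A}(x_0,x_1,\dots)=(0,A_0x_0,A_1x_1,\dots)$. A bounded operator $T$ is hyponormal if $T^*T-TT^*\ge0$, and quadratically hyponormal if $T+\lambda T^2$ is hyponormal for every $\lambda\in\mathbb C$. *)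

theory Defs
  imports "HOL-Analysis.Analysis"
begin

text \<open>Vectors of C^p are modelled as complex^'p with 'p a finite type (p = CARD('p) >= 1),
  p x p matrices as complex^'p^'p. Elements of l2(C^p) are sequences nat => complex^'p
  with square-summable norms.\<close>

definition cinner :: "complex^'p::finite \<Rightarrow> complex^'p \<Rightarrow> complex" where
  "cinner v w = (\<Sum>i\<in>UNIV. v $ i * cnj (w $ i))"

definition cadj :: "complex^'p::finite^'p \<Rightarrow> complex^'p^'p" where
  "cadj A = (\<chi> i j. cnj (A $ j $ i))"

definition mat_positive :: "complex^'p::finite^'p \<Rightarrow> bool" where
  "mat_positive A \<longleftrightarrow> (\<forall>v. Im (cinner (A *v v) v) = 0 \<and> Re (cinner (A *v v) v) \<ge> 0)"

definition in_l2 :: "(nat \<Rightarrow> complex^'p::finite) \<Rightarrow> bool" where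
  "in_l2 x \<longleftrightarrow> summable (\<lambda>n. (norm (x n))\<^sup>2)"

definition l2_inner :: "(nat \<Rightarrow> complex^'p::finite) \<Rightarrow> (nat \<Rightarrow> complex^'p) \<Rightarrow> complex" where
  "l2_inner x y = (\<Sum>n. cinner (x n) (y n))"

definition wshift :: "(nat \<Rightarrow> complex^'p::finite^'p) \<Rightarrow> (nat \<Rightarrow> complex^'p) \<Rightarrow> (nat \<Rightarrow> complex^'p)" where
  "wshift A x = (\<lambda>n. if n = 0 then 0 else A (n - 1) *v x (n - 1))"

definition wshift_adj :: "(nat \<Rightarrow> complex^'p::finite^'p) \<Rightarrow> (nat \<Rightarrow> complex^'p) \<Rightarrow> (nat \<Rightarrow> complex^'p)" where
  "wshift_adj A x = (\<lambda>n. cadj (A n) *v x (Suc n))"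

definition hyponormal ::
  "((nat \<Rightarrow> complex^'p::finite) \<Rightarrow> (nat \<Rightarrow> complex^'p)) \<Rightarrow> ((nat \<Rightarrow> complex^'p) \<Rightarrow> (nat \<Rightarrow> complex^'p)) \<Rightarrow> bool" where
  "hyponormal T Tadj \<longleftrightarrow>
     (\<forall>x. in_l2 x \<longrightarrow>
        (let q = l2_inner (\<lambda>n. Tadj (T x) n - T (Tadj x) n) x in Im q = 0 \<and> Re q \<ge> 0))"

text \<open>Quadratic hyponormality: T + c T^2 hyponormal for all complex c; the adjoint of
  T + c T^2 is T* + cnj c (T*)^2.\<close>
definition quad_hyponormal ::
  "((nat \<Rightarrow> complex^'p::finite) \<Rightarrow> (nat \<Rightarrow> complex^'p)) \<Rightarrow> ((nat \<Rightarrow> complex^'p) \<Rightarrow> (nat \<Rightarrow> complex^'p)) \<Rightarrow> bool" where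
  "quad_hyponormal T Tadj \<longleftrightarrow>
     (\<forall>c::complex. hyponormal (\<lambda>x n. T x n + c *s T (T x) n)
                             (\<lambda>x n. Tadj x n + cnj c *s Tadj (Tadj x) n))"

end

theory Submission
  imports Defs
begin


lemma scaleR_sv: "(complex_of_real r) *s (u::complex^'p) = r *\<^sub>R u"
proof -
  have "\<And>i. (r *\<^sub>R u) $ i = complex_of_real r * u $ i"
    by (subst vector_scaleR_component) (simp add: scaleR_conv_of_real)
  then show ?thesis by (simp add: vec_eq_iff)
qed

lemma mv_scaleR: "(M::complex^'p^'p) *v (r *\<^sub>R u) = r *\<^sub>R (M *v u)"
  by (metis scaleR_sv vec.scale)

lemma cinner_Re: "Re (cinner a b) = inner a b"
  unfolding cinner_def inner_vec_def by (simp add: Re_sum inner_complex_def)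

lemma cinner_self: "Re (cinner a a) = (norm a)^2"
  by (simp add: cinner_Re power2_norm_eq_inner)

lemma cinner_cnj: "cinner b a = cnj (cinner a b)"
  unfolding cinner_def by (simp add: mult.commute)

lemma cinner_add_left: "cinner (a + b) c = cinner a c + cinner b c"
  unfolding cinner_def by (simp add: distrib_right sum.distrib)
lemma cinner_add_right: "cinner a (b + c) = cinner a b + cinner a c"
  unfolding cinner_def by (simp add: distrib_left sum.distrib)
lemma cinner_zero_left[simp]: "cinner 0 c = 0"
  unfolding cinner_def by simp
lemma cinner_zero_right[simp]: "cinner c 0 = 0"
  unfolding cinner_def by simp
lemma cinner_scale_left: "cinner (k *s a) c = k * cinner a c"
  unfolding cinner_def by (simp add: sum_distrib_left mult.assoc)
lemma cinner_scale_right: "cinner a (k *s c) = cnj k * cinner a c"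
  unfolding cinner_def by (simp add: sum_distrib_left algebra_simps)

lemma cinner_adj: "cinner (cadj M *v a) b = cinner a (M *v b)"
proof -
  have "cinner (cadj M *v a) b = (\<Sum>i\<in>UNIV. \<Sum>j\<in>UNIV. cnj (M$j$i) * a$j * cnj (b$i))"
    unfolding cinner_def cadj_def matrix_vector_mult_def by (simp add: sum_distrib_right)
  also have "\<dots> = (\<Sum>j\<in>UNIV. \<Sum>i\<in>UNIV. cnj (M$j$i) * a$j * cnj (b$i))"
    by (rule sum.swap)
  also have "\<dots> = cinner a (M *v b)"
    unfolding cinner_def matrix_vector_mult_def by (simp add: sum_distrib_left algebra_simps)
  finally show ?thesis .
qed

lemma cadj_cadj[simp]: "cadj (cadj M) = M"
  unfolding cadj_def by (simp add: vec_eq_iff)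

lemma cinner_adj2: "cinner (M *v a) b = cinner a (cadj M *v b)"
  using cinner_adj[of "cadj M" a b] by simp

lemma cinner_axis: "cinner (axis i 1) u = cnj (u $ i)"
proof -
  have eq: "(\<lambda>j. axis i 1 $ j * cnj (u$j)) = (\<lambda>j. if j = i then cnj (u$j) else 0)"
    by (auto simp: axis_def)
  show ?thesis unfolding cinner_def eq by simp
qed

lemma vec_eq_cinner: assumes "\<And>a. cinner a u = cinner a w" shows "u = w"
proof -
  have "\<And>i. cnj (u$i) = cnj (w$i)" using assms[of "axis _ 1"] by (simp add: cinner_axis)
  then show ?thesis by (simp add: vec_eq_iff)
qed

lemma herm: assumes "mat_positive (A::complex^'p^'p)" shows "cadj A = A"
proof -
  have d: "cinner (A *v v) v = cinner v (A *v v)" for v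
  proof -
    have "Im (cinner (A *v v) v) = 0" using assms unfolding mat_positive_def by blast
    then show ?thesis by (subst cinner_cnj) (simp add: complex_eq_iff)
  qed
  have e: "cinner (A *v a) b = cinner a (A *v b)" for a b
  proof -
    have 1: "cinner (A *v (a+b)) (a+b) = cinner (a+b) (A *v (a+b))" by (rule d)
    have 2: "cinner (A *v (a+ \<i> *s b)) (a+ \<i> *s b) = cinner (a+ \<i> *s b) (A *v (a+ \<i> *s b))" by (rule d)
    note ex = matrix_vector_right_distrib vec.scale cinner_add_left cinner_add_right cinner_scale_left cinner_scale_right d
    from 1 have 1: "cinner (A *v a) b + cinner (A *v b) a = cinner a (A *v b) + cinner b (A *v a)"
      by (simp add: ex algebra_simps)
    from 2 have 2: "\<i> * cinner (A *v b) a - \<i> * cinner (A *v a) b = \<i> * cinner b (A *v a) - \<i> * cinner a (A *v b)"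
      by (simp add: ex algebra_simps)
    from 2 have 2: "cinner (A *v b) a - cinner (A *v a) b = cinner b (A *v a) - cinner a (A *v b)"
      by (simp add: right_diff_distrib[symmetric])
    have "(cinner (A *v a) b + cinner (A *v b) a) - (cinner (A *v b) a - cinner (A *v a) b)
      = (cinner a (A *v b) + cinner b (A *v a)) - (cinner b (A *v a) - cinner a (A *v b))"
      using 1 2 by simp
    then have "2 * cinner (A *v a) b = 2 * cinner a (A *v b)" by (simp add: algebra_simps)
    then show ?thesis by simp
  qed
  have "cadj A *v b = A *v b" for b
    by (rule vec_eq_cinner) (metis e cinner_adj2)
  then show ?thesis by (simp add: matrix_eq)
qed

definition S :: "nat \<Rightarrow> (nat \<Rightarrow> complex^'p::finite) \<Rightarrow> (nat \<Rightarrow> complex^'p) \<Rightarrow> complex" where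
  "S M u x = (\<Sum>k<M. cinner (u k) (x k))"

lemma S_cnj: "S M u x = cnj (S M x u)"
  unfolding S_def by (simp add: cinner_cnj[of "u _"])

lemma S_adj: assumes "\<forall>k\<ge>M. x k = 0"
  shows "S (Suc M) (wshift_adj A y) x = S (Suc M) y (wshift A x)"
proof -
  have "S (Suc M) (wshift_adj A y) x = (\<Sum>k<M. cinner (cadj (A k) *v y (Suc k)) (x k))"
    unfolding S_def wshift_adj_def using assms by simp
  also have "\<dots> = (\<Sum>k<M. cinner (y (Suc k)) (A k *v x k))"
    by (simp add: cinner_adj)
  also have "\<dots> = S (Suc M) y (wshift A x)"
    unfolding S_def wshift_def by (subst sum.lessThan_Suc_shift) simp
  finally show ?thesis .
qed

lemma S_adj': assumes "\<forall>k\<ge>M. y k = 0"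
  shows "S (Suc M) (wshift A y) x = S (Suc M) y (wshift_adj A x)"
  using S_adj[OF assms, of A x] by (metis S_cnj)

lemma S_lin1: "S M (\<lambda>k. a k + c *s b k) x = S M a x + c * S M b x"
  unfolding S_def by (simp add: cinner_add_left cinner_scale_left sum.distrib sum_distrib_left)
lemma S_lin2: "S M x (\<lambda>k. a k + c *s b k) = S M x a + cnj c * S M x b"
  unfolding S_def by (simp add: cinner_add_right cinner_scale_right sum.distrib sum_distrib_left)
lemma S_diff1: "S M (\<lambda>k. a k - b k) x = S M a x - S M b x"
  unfolding S_def by (simp add: cinner_def algebra_simps sum_subtractf)

lemma supp_W: "\<forall>k\<ge>N. x k = 0 \<Longrightarrow> \<forall>k\<ge>Suc N. wshift A x k = 0"
  unfolding wshift_def by auto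
lemma supp_Ws: "\<forall>k\<ge>N. x k = 0 \<Longrightarrow> \<forall>k\<ge>N. wshift_adj A x k = 0"
  unfolding wshift_adj_def by auto

lemma l2_inner_S: assumes "\<forall>k\<ge>N. x k = 0" "N \<le> M"
  shows "l2_inner u x = S M u x"
proof -
  have "(\<Sum>n. cinner (u n) (x n)) = (\<Sum>n\<in>{..<M}. cinner (u n) (x n))"
    by (rule suminf_finite) (use assms in auto)
  then show ?thesis unfolding l2_inner_def S_def by simp
qed

lemma q_formula:
  fixes c :: complex and x :: "nat \<Rightarrow> complex^'p::finite"
  assumes supp: "\<forall>k\<ge>N. x k = 0"
  shows "l2_inner (\<lambda>n. (\<lambda>x n. wshift_adj A x n + cnj c *s wshift_adj A (wshift_adj A x) n)
                ((\<lambda>x n. wshift A x n + c *s wshift A (wshift A x) n) x) n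
            - (\<lambda>x n. wshift A x n + c *s wshift A (wshift A x) n)
                ((\<lambda>x n. wshift_adj A x n + cnj c *s wshift_adj A (wshift_adj A x) n) x) n) x
    = S (Suc (Suc N)) (\<lambda>n. wshift A x n + c *s wshift A (wshift A x) n)
                       (\<lambda>n. wshift A x n + c *s wshift A (wshift A x) n)
    - S (Suc (Suc N)) (\<lambda>n. wshift_adj A x n + cnj c *s wshift_adj A (wshift_adj A x) n)
                       (\<lambda>n. wshift_adj A x n + cnj c *s wshift_adj A (wshift_adj A x) n)"
  (is "l2_inner (\<lambda>n. ?Ts ?T n - ?Tm ?Tsx n) x = S ?M ?T ?T - S ?M ?Tsx ?Tsx")
proof -
  have s1: "\<forall>k\<ge>Suc N. x k = 0" using supp by auto
  have s2: "\<forall>k\<ge>Suc N. wshift A x k = 0" using supp_W[OF supp] by auto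
  have s3: "\<forall>k\<ge>Suc N. ?Tsx k = 0" using supp_Ws[OF supp, of A] supp_Ws[OF supp_Ws[OF supp], of A] by auto
  have s4: "\<forall>k\<ge>Suc N. wshift A ?Tsx k = 0" using supp_W[of N ?Tsx A] supp_Ws[OF supp, of A] supp_Ws[OF supp_Ws[OF supp], of A] by auto
  have "l2_inner (\<lambda>n. ?Ts ?T n - ?Tm ?Tsx n) x = S ?M (\<lambda>n. ?Ts ?T n - ?Tm ?Tsx n) x"
    by (rule l2_inner_S[OF supp]) simp
  also have "\<dots> = S ?M (?Ts ?T) x - S ?M (?Tm ?Tsx) x" by (rule S_diff1)
  also have "S ?M (?Ts ?T) x = S ?M ?T ?T"
  proof -
    have "S ?M (?Ts ?T) x = S ?M (wshift_adj A ?T) x + cnj c * S ?M (wshift_adj A (wshift_adj A ?T)) x"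
      by (rule S_lin1)
    also have "\<dots> = S ?M ?T (wshift A x) + cnj c * S ?M ?T (wshift A (wshift A x))"
      by (simp add: S_adj[OF s1] S_adj[OF s2])
    also have "\<dots> = S ?M ?T ?T" by (rule S_lin2[symmetric])
    finally show ?thesis .
  qed
  also have "S ?M (?Tm ?Tsx) x = S ?M ?Tsx ?Tsx"
  proof -
    have "S ?M (?Tm ?Tsx) x = S ?M (wshift A ?Tsx) x + c * S ?M (wshift A (wshift A ?Tsx)) x"
      by (rule S_lin1)
    also have "\<dots> = S ?M ?Tsx (wshift_adj A x) + c * S ?M ?Tsx (wshift_adj A (wshift_adj A x))"
      by (simp add: S_adj'[OF s3] S_adj'[OF s4])
    also have "\<dots> = S ?M ?Tsx ?Tsx" using S_lin2[of ?M ?Tsx "wshift_adj A x" "cnj c" "wshift_adj A (wshift_adj A x)"] by simp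
    finally show ?thesis .
  qed
  finally show ?thesis .
qed

lemma W0: "wshift A x 0 = 0" unfolding wshift_def by simp
lemma WSuc: "wshift A x (Suc k) = A k *v x k" unfolding wshift_def by simp
lemma WsE: "wshift_adj A x k = cadj (A k) *v x (Suc k)" unfolding wshift_adj_def by simp

lemma inner_herm: assumes "cadj M = M" shows "inner (M *v a) b = inner a (M *v b)"
  using cinner_adj2[of M a b] assms by (metis cinner_Re)

lemma ReS: "Re (S M u u) = (\<Sum>k<M. (norm (u k))^2)"
  by (simp add: S_def Re_sum cinner_self)

lemma norm_comb: "(norm ((-s) *\<^sub>R b + (s^3) *\<^sub>R c))^2 = s^2 * inner b b - 2 * s^4 * inner b c + s^6 * inner c c"
  unfolding power2_norm_eq_inner
  by (simp add: inner_add_left inner_add_right inner_commute[of c b] algebra_simps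
      power2_eq_square power3_eq_cube numeral_eq_Suc)

lemma key_ineq:
  fixes A :: "nat \<Rightarrow> complex^'p::finite^'p" and m :: nat and w :: "complex^'p" and Ci :: "complex^'p^'p"
  assumes herm: "\<forall>k. cadj (A k) = A k"
    and inv: "A m ** Ci = mat 1"
    and eq: "A (Suc (Suc m)) = A (Suc m)"
    and qh: "quad_hyponormal (wshift A) (wshift_adj A)"
    and s: "s > 0"
  shows "s^4 * (norm (A (Suc m) *v (A (Suc m) *v (A (Suc m) *v w)) - A (m+3) *v (A (m+3) *v (A (Suc m) *v w))))^2
     \<le> s^6 * ((norm (A (Suc m) *v (A (Suc m) *v (A (Suc m) *v (A (Suc m) *v w)))))^2
            + (norm (A (m+5) *v (A (m+4) *v (A (m+3) *v (A (Suc m) *v w)))))^2)"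
proof -
  define B where "B = A (Suc m)"
  define C where "C = A m"
  define E where "E = A (m+3)"
  define v where "v = B *v w"
  define b where "b = B *v v"
  define a where "a = B *v b"
  define ba where "ba = B *v a"
  define p where "p = E *v (E *v v)"
  define bp where "bp = B *v p"
  define gv where "gv = A (m+5) *v (A (m+4) *v (E *v v))"
  define y1 where "y1 = Ci *v a"
  define x where "x = (\<lambda>k. if k = m then (s^2) *\<^sub>R y1 else if k = Suc m then (-s) *\<^sub>R v
     else if k = Suc (Suc m) then w else if k = m+3 then (-s) *\<^sub>R v
     else if k = m+4 then (s^2) *\<^sub>R (E *v v) else 0)"
  define c where "c = complex_of_real s"
  define T where "T = (\<lambda>k. wshift A x k + c *s wshift A (wshift A x) k)"
  define Ts where "Ts = (\<lambda>k. wshift_adj A x k + cnj c *s wshift_adj A (wshift_adj A x) k)"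
  have supp: "\<forall>k\<ge>m+5. x k = 0" unfolding x_def by auto
  have l2: "in_l2 x" unfolding in_l2_def
    by (rule summable_finite[of "{..<m+5}"]) (use supp in auto)
  have "0 \<le> Re (S (Suc (Suc (m+5))) T T - S (Suc (Suc (m+5))) Ts Ts)"
  proof -
    have "hyponormal (\<lambda>x n. wshift A x n + c *s wshift A (wshift A x) n)
          (\<lambda>x n. wshift_adj A x n + cnj c *s wshift_adj A (wshift_adj A x) n)"
      using qh unfolding quad_hyponormal_def by blast
    then have "0 \<le> Re (l2_inner (\<lambda>n. (\<lambda>x n. wshift_adj A x n + cnj c *s wshift_adj A (wshift_adj A x) n)
                ((\<lambda>x n. wshift A x n + c *s wshift A (wshift A x) n) x) n
            - (\<lambda>x n. wshift A x n + c *s wshift A (wshift A x) n)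
                ((\<lambda>x n. wshift_adj A x n + cnj c *s wshift_adj A (wshift_adj A x) n) x) n) x)"
      using l2 unfolding hyponormal_def Let_def by blast
    then show ?thesis unfolding q_formula[OF supp] T_def Ts_def .
  qed
  have hB: "cadj B = B" and hC: "cadj C = C" and hE: "cadj E = E" and hF: "cadj (A k) = A k" for k
    using herm unfolding B_def C_def E_def by auto
  have eqB: "A (Suc (Suc m)) = B" using eq B_def by simp
  have Cy1: "C *v y1 = a" unfolding y1_def C_def
    by (simp add: matrix_vector_mul_assoc inv)
  have sc: "c *s u = s *\<^sub>R u" for u :: "complex^'p" unfolding c_def by (rule scaleR_sv)
  have csc: "cnj c *s u = s *\<^sub>R u" for u :: "complex^'p" unfolding c_def by (simp add: scaleR_sv)
  have c34: "3 + m = m + 3" "4 + m = m + 4" "5 + m = m + 5" "2 + m = m + 2" "6 + m = m + 6" by simp_all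
  have c35: "Suc (Suc (Suc m)) = m+3" "Suc (Suc (Suc (Suc m))) = m+4" "Suc (m+2) = m+3" "Suc (m+3) = m+4" by simp_all
  have BS: "A (Suc m) = B" by (simp add: B_def)
  note mvs = mv_scaleR vec.neg c34 c35 BS hB hE hC
  have Wx: "wshift A x k = (if k = Suc m then (s^2) *\<^sub>R a else if k = m+2 then (-s) *\<^sub>R b
      else if k = m+3 then v else if k = m+4 then (-s) *\<^sub>R (E *v v)
      else if k = m+5 then (s^2) *\<^sub>R (A (m+4) *v (E *v v)) else 0)" for k
    unfolding wshift_def x_def using Cy1
    by (auto simp: mvs eqB b_def v_def E_def C_def)
  have WWx: "wshift A (wshift A x) k = (if k = m+2 then (s^2) *\<^sub>R ba else if k = m+3 then (-s) *\<^sub>R a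
      else if k = m+4 then E *v v else if k = m+5 then (-s) *\<^sub>R (A (m+4) *v (E *v v))
      else if k = m+6 then (s^2) *\<^sub>R gv else 0)" for k
    unfolding wshift_def[of A "wshift A x"] Wx
    by (auto simp: mvs eqB ba_def a_def b_def v_def E_def gv_def)
  have Wsx1: "wshift_adj A x (Suc m) = v" and Wsx2: "wshift_adj A x (m+2) = (-s) *\<^sub>R b"
    and Wsx3: "wshift_adj A x (m+3) = (s^2) *\<^sub>R p" and Wsx4: "wshift_adj A x (m+4) = 0"
    unfolding wshift_adj_def x_def
    by (auto simp: mvs eqB hF b_def v_def E_def p_def)
  have WWsx1: "wshift_adj A (wshift_adj A x) (Suc m) = (-s) *\<^sub>R a"
    and WWsx2: "wshift_adj A (wshift_adj A x) (m+2) = (s^2) *\<^sub>R bp"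
    and WWsx3: "wshift_adj A (wshift_adj A x) (m+3) = 0"
    unfolding wshift_adj_def[of A "wshift_adj A x"]
    using Wsx1 Wsx2 Wsx3 Wsx4
    by (auto simp: mvs eqB hF a_def b_def E_def bp_def)
  have Tv: "T k = (if k = Suc m then (s^2) *\<^sub>R a else if k = m+2 then (-s) *\<^sub>R b + (s^3) *\<^sub>R ba
      else if k = m+3 then v - (s^2) *\<^sub>R a else if k = m+6 then (s^3) *\<^sub>R gv else 0)" for k
    unfolding T_def sc Wx WWx
    by (auto simp: power2_eq_square power3_eq_cube algebra_simps)
  have Ts1: "Ts (Suc m) = v - (s^2) *\<^sub>R a"
    unfolding Ts_def csc using Wsx1 Wsx2 Wsx3 WWsx1 WWsx2 WWsx3 by (simp add: power2_eq_square)
  have Ts2: "Ts (m+2) = (-s) *\<^sub>R b + (s^3) *\<^sub>R bp"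
    unfolding Ts_def csc using Wsx1 Wsx2 Wsx3 WWsx1 WWsx2 WWsx3 by (simp add: power2_eq_square power3_eq_cube)
  have Ts3: "Ts (m+3) = (s^2) *\<^sub>R p"
    unfolding Ts_def csc using Wsx1 Wsx2 Wsx3 WWsx1 WWsx2 WWsx3 by simp
  define M where "M = Suc (Suc (m+5))"
  have fin: "finite {..<M}" by simp
  have sumT: "(\<Sum>k<M. (norm (T k))^2) = (\<Sum>k\<in>{Suc m, m+2, m+3, m+6}. (norm (T k))^2)"
    by (rule sum.mono_neutral_right) (auto simp: M_def Tv)
  have sumTs: "(\<Sum>k\<in>{Suc m, m+2, m+3}. (norm (Ts k))^2) \<le> (\<Sum>k<M. (norm (Ts k))^2)"
    by (rule sum_mono2) (auto simp: M_def)
  have main: "0 \<le> (norm ((s^2) *\<^sub>R a))^2 + (norm ((-s) *\<^sub>R b + (s^3) *\<^sub>R ba))^2 + (norm ((s^3) *\<^sub>R gv))^2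
     - (norm ((-s) *\<^sub>R b + (s^3) *\<^sub>R bp))^2 - (norm ((s^2) *\<^sub>R p))^2"
  proof -
    have "0 \<le> (\<Sum>k<M. (norm (T k))^2) - (\<Sum>k<M. (norm (Ts k))^2)"
      using \<open>0 \<le> Re (S (Suc (Suc (m+5))) T T - S (Suc (Suc (m+5))) Ts Ts)\<close>
      unfolding M_def[symmetric] by (simp add: ReS)
    moreover have "(\<Sum>k\<in>{Suc m, m+2, m+3, m+6}. (norm (T k))^2) = (norm (T (Suc m)))^2 + (norm (T (m+2)))^2
       + (norm (T (m+3)))^2 + (norm (T (m+6)))^2" by simp
    moreover have "(\<Sum>k\<in>{Suc m, m+2, m+3}. (norm (Ts k))^2) = (norm (Ts (Suc m)))^2 + (norm (Ts (m+2)))^2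
       + (norm (Ts (m+3)))^2" by simp
    moreover have "T (Suc m) = (s^2) *\<^sub>R a" "T (m+2) = (-s) *\<^sub>R b + (s^3) *\<^sub>R ba"
      "T (m+3) = v - (s^2) *\<^sub>R a" "T (m+6) = (s^3) *\<^sub>R gv" by (simp_all add: Tv)
    ultimately show ?thesis using sumT sumTs Ts1 Ts2 Ts3 by simp
  qed
  have ip1: "inner b ba = inner a a" unfolding ba_def a_def using inner_herm[OF hB] by metis
  have ip2: "inner b bp = inner a p" unfolding bp_def a_def using inner_herm[OF hB] by metis
  have "s^4 * (norm (a - p))^2 \<le> s^6 * ((norm ba)^2 + (norm gv)^2)"
  proof -
    have n2: "(norm (r *\<^sub>R u))^2 = r^2 * inner u u" for r and u :: "complex^'p"
      by (simp add: power2_norm_eq_inner power_mult_distrib)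
    have "(norm (a - p))^2 = inner a a - 2 * inner a p + inner p p"
      by (simp add: power2_norm_eq_inner inner_diff_left inner_diff_right inner_commute[of p a])
    moreover have pos: "0 \<le> inner bp bp * s^6" by simp
    ultimately show ?thesis using main unfolding norm_comb n2 ip1 ip2
      apply (simp add: power2_norm_eq_inner algebra_simps power_mult_distrib[symmetric] flip: power_mult)
      apply (insert pos)
      apply linarith
      done
  qed
  then show ?thesis unfolding a_def b_def v_def p_def ba_def gv_def E_def B_def .
qed



lemma inner_axis_Re: "inner (axis i 1) (z::complex^'p::finite) = Re (z $ i)"
  by (simp add: inner_axis' inner_complex_def)

lemma mv_axis_diag: "((Z::complex^'p::finite^'p) *v axis i 1) $ i = Z $ i $ i"
proof -
  have eq: "(\<Sum>j\<in>UNIV. Z $ i $ j * axis i 1 $ j) = (\<Sum>j\<in>UNIV. if j = i then Z $ i $ j else 0)"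
    by (rule sum.cong) (auto simp: axis_def)
  show ?thesis unfolding matrix_vector_mult_def by (simp add: eq)
qed

lemma trace_swap: fixes X Y :: "complex^'p::finite^'p"
  shows "(\<Sum>i\<in>UNIV. inner (axis i 1) (X *v (Y *v axis i 1))) = (\<Sum>i\<in>UNIV. inner (axis i 1) (Y *v (X *v axis i 1)))"
proof -
  have g: "(\<Sum>i\<in>UNIV. inner (axis i 1) (P *v (Q *v axis i 1))) = Re (trace (P ** Q))"
    for P Q :: "complex^'p^'p"
  proof -
    have "inner (axis i 1) (P *v (Q *v axis i 1)) = Re ((P ** Q) $ i $ i)" for i
      by (simp only: inner_axis_Re matrix_vector_mul_assoc mv_axis_diag)
    then have "(\<Sum>i\<in>UNIV. inner (axis i 1) (P *v (Q *v axis i 1))) = (\<Sum>i\<in>UNIV. Re ((P ** Q) $ i $ i))"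
      by simp
    also have "\<dots> = Re (trace (P ** Q))" unfolding trace_def by (simp only: Re_sum)
    finally show ?thesis .
  qed
  show ?thesis unfolding g by (simp only: trace_mul_sym[of X Y])
qed

lemma pos_inner: "mat_positive E \<Longrightarrow> 0 \<le> inner (E *v u) u"
  unfolding mat_positive_def by (metis cinner_Re)

lemma psd_zero: assumes h: "cadj E = E" and pE: "mat_positive E" and z: "inner (E *v u) u = 0"
  shows "E *v u = 0"
proof -
  define h where "h = E *v u"
  define q where "q = inner (E *v h) h"
  define N where "N = inner h h"
  have q0: "0 \<le> q" unfolding q_def by (rule pos_inner[OF pE])
  have N0: "0 \<le> N" unfolding N_def by simp
  have "0 \<le> 2 * r * N + r^2 * q" for r
  proof -
    have "0 \<le> inner (E *v (u + r *\<^sub>R h)) (u + r *\<^sub>R h)" by (rule pos_inner[OF pE])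
    moreover have "E *v (u + r *\<^sub>R h) = h + r *\<^sub>R (E *v h)"
      by (simp add: h_def matrix_vector_right_distrib mv_scaleR)
    moreover have "inner (E *v h) u = N" unfolding N_def using inner_herm[OF h, of h u] h_def by simp
    moreover have "inner h u = 0" using z h_def by simp
    ultimately have "0 \<le> inner (h + r *\<^sub>R (E *v h)) (u + r *\<^sub>R h)" by simp
    also have "inner (h + r *\<^sub>R (E *v h)) (u + r *\<^sub>R h) = inner h u + r * inner h h + r * inner (E *v h) u + r * r * inner (E *v h) h"
      by (simp only: inner_add_left inner_add_right inner_scaleR_left inner_scaleR_right) (simp add: algebra_simps)
    finally show ?thesis using \<open>inner (E *v h) u = N\<close> \<open>inner h u = 0\<close> unfolding q_def N_def
      by (simp add: power2_eq_square)
  qed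
  define d where "d = q + 1"
  have d0: "d > 0" "d \<noteq> 0" using q0 unfolding d_def by auto
  from this(1) \<open>\<And>r. 0 \<le> 2 * r * N + r^2 * q\<close>[of "- N / d"]
  have "0 \<le> d^2 * (2 * (- N / d) * N + (- N / d)^2 * q)" by simp
  also have "d^2 * (2 * (- N / d) * N + (- N / d)^2 * q) = - 2 * N^2 * d + N^2 * q"
    using d0 by (simp add: power2_eq_square field_simps)
  also have "\<dots> = - (N^2 * (q + 2))" unfolding d_def by (simp add: algebra_simps)
  finally have "N^2 * (q + 2) \<le> 0" by simp
  moreover have "0 < q + 2" using q0 by simp
  ultimately have "N^2 \<le> 0" by (simp add: mult_le_0_iff)
  then have "N = 0" by simp
  then show ?thesis unfolding N_def h_def by simp
qed

lemma mv_axis: "((Z::complex^'p::finite^'p) *v axis i 1) $ j = Z $ j $ i"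
proof -
  have eq: "(\<Sum>k\<in>UNIV. Z $ j $ k * axis i 1 $ k) = (\<Sum>k\<in>UNIV. if k = i then Z $ j $ k else 0)"
    by (rule sum.cong) (auto simp: axis_def)
  show ?thesis unfolding matrix_vector_mult_def by (simp add: eq)
qed

lemma mv_diff: "((E::complex^'p::finite^'p) - B) *v u = E *v u - B *v u"
  by (simp add: matrix_vector_mult_def vec_eq_iff sum_subtractf algebra_simps)

lemma cadj_diff: "cadj ((E::complex^'p::finite^'p) - B) = cadj E - cadj B"
  by (simp add: cadj_def vec_eq_iff)

lemma sqrt_unique:
  fixes E B Ei :: "complex^'p::finite^'p"
  assumes hE: "cadj E = E" and hB: "cadj B = B" and pE: "mat_positive E" and pB: "mat_positive B"
    and iE: "Ei ** E = mat 1" and sq: "\<And>u. E *v (E *v u) = B *v (B *v u)"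
  shows "E = B"
proof -
  define M where "M = E - B"
  have Mv: "M *v u = E *v u - B *v u" for u unfolding M_def by (rule mv_diff)
  have hM: "cadj M = M" unfolding M_def cadj_diff hE hB ..
  define e where "e = (\<lambda>i::'p. axis i (1::complex))"
  have id: "E *v (M *v u) = - (M *v (B *v u))" for u
    unfolding Mv using sq[of u] by (simp add: matrix_vector_mult_diff_distrib algebra_simps)
  have s1: "(\<Sum>i\<in>UNIV. inner (E *v (M *v e i)) (M *v e i)) = - (\<Sum>i\<in>UNIV. inner (M *v (B *v e i)) (M *v e i))"
    by (simp add: id sum_negf)
  have s2: "(\<Sum>i\<in>UNIV. inner (M *v (B *v e i)) (M *v e i)) = (\<Sum>i\<in>UNIV. inner (e i) (B *v (M *v (M *v e i))))"
  proof (rule sum.cong)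
    fix i
    have "inner (M *v (B *v e i)) (M *v e i) = inner (B *v e i) (M *v (M *v e i))" by (rule inner_herm[OF hM])
    also have "\<dots> = inner (e i) (B *v (M *v (M *v e i)))" by (rule inner_herm[OF hB])
    finally show "inner (M *v (B *v e i)) (M *v e i) = inner (e i) (B *v (M *v (M *v e i)))" .
  qed simp
  have s3: "(\<Sum>i\<in>UNIV. inner (B *v (M *v e i)) (M *v e i)) = (\<Sum>i\<in>UNIV. inner (e i) (M *v (B *v (M *v e i))))"
  proof (rule sum.cong)
    fix i
    have "inner (B *v (M *v e i)) (M *v e i) = inner (M *v (B *v (M *v e i))) (e i)" by (rule inner_herm[OF hM, symmetric])
    then show "inner (B *v (M *v e i)) (M *v e i) = inner (e i) (M *v (B *v (M *v e i)))" by (simp add: inner_commute)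
  qed simp
  have s4: "(\<Sum>i\<in>UNIV. inner (e i) (M *v (B *v (M *v e i)))) = (\<Sum>i\<in>UNIV. inner (e i) (B *v (M *v (M *v e i))))"
    using trace_swap[of M "B ** M"] unfolding e_def by (simp add: matrix_vector_mul_assoc matrix_mul_assoc)
  have tot: "(\<Sum>i\<in>UNIV. inner (E *v (M *v e i)) (M *v e i)) + (\<Sum>i\<in>UNIV. inner (B *v (M *v e i)) (M *v e i)) = 0"
    using s1 s2 s3 s4 by simp
  have nE: "0 \<le> inner (E *v (M *v e i)) (M *v e i)" for i by (rule pos_inner[OF pE])
  have nB: "0 \<le> inner (B *v (M *v e i)) (M *v e i)" for i by (rule pos_inner[OF pB])
  have "(\<Sum>i\<in>UNIV. inner (E *v (M *v e i)) (M *v e i)) = 0"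
  proof -
    have "0 \<le> (\<Sum>i\<in>UNIV. inner (E *v (M *v e i)) (M *v e i))" by (rule sum_nonneg) (rule nE)
    moreover have "0 \<le> (\<Sum>i\<in>UNIV. inner (B *v (M *v e i)) (M *v e i))" by (rule sum_nonneg) (rule nB)
    ultimately show ?thesis using tot by linarith
  qed
  then have z: "inner (E *v (M *v e i)) (M *v e i) = 0" for i
    using sum_nonneg_eq_0_iff[of UNIV "\<lambda>i. inner (E *v (M *v e i)) (M *v e i)"] nE by auto
  have "M *v e i = 0" for i
  proof -
    have "E *v (M *v e i) = 0" by (rule psd_zero[OF hE pE z])
    then have "Ei *v (E *v (M *v e i)) = 0" by simp
    moreover have "Ei *v (E *v (M *v e i)) = M *v e i"
      by (simp only: matrix_vector_mul_assoc[of Ei E] iE matrix_vector_mul_lid)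
    ultimately show ?thesis by simp
  qed
  then have "M = 0" unfolding e_def by (metis mv_axis vec_eq_iff zero_index)
  then show ?thesis unfolding M_def by simp
qed

lemma small_K: fixes K L :: real
  assumes h: "\<And>s. s > 0 \<Longrightarrow> s^4 * K \<le> s^6 * L" and K0: "0 \<le> K" and L0: "0 \<le> L"
  shows "K = 0"
proof (rule ccontr)
  assume "K \<noteq> 0"
  then have Kp: "K > 0" using K0 by simp
  define t where "t = K / (2 * (L + 1))"
  have tp: "t > 0" unfolding t_def using Kp L0 by simp
  define s where "s = sqrt t"
  have sp: "s > 0" unfolding s_def using tp by simp
  have s2: "s^2 = t" unfolding s_def using tp by simp
  have "s^4 = s^2 * s^2" by (simp add: power_add[symmetric])
  then have s4: "s^4 = t^2" using s2 by (simp add: power2_eq_square)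
  have "s^6 = s^2 * s^2 * s^2" by (simp add: power_add[symmetric])
  then have s6: "s^6 = t^2 * t" using s2 by (simp add: power2_eq_square)
  have "t^2 * K \<le> t^2 * (t * L)" using h[OF sp] unfolding s4 s6 by (simp add: mult.assoc)
  then have "K \<le> t * L" using tp by simp
  moreover have "t * L < K"
  proof -
    have "t * L = K * (L / (2 * (L + 1)))" unfolding t_def by simp
    also have "\<dots> < K * 1"
      using Kp L0 by (intro mult_strict_left_mono) (simp_all add: field_simps)
    finally show ?thesis by simp
  qed
  ultimately show False by simp
qed

theorem mainTheorem5:
  fixes A :: "nat \<Rightarrow> complex^'p::finite^'p" and n :: nat
  assumes pos: "\<forall>k. mat_positive (A k) \<and> invertible (A k)"
    and bdd: "\<exists>M. \<forall>k. onorm (\<lambda>v. A k *v v) \<le> M"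
    and qh: "quad_hyponormal (wshift A) (wshift_adj A)"
    and n1: "n \<ge> 1"
    and eq: "A n = A (Suc n)"
  shows "(A (n - 1) = A n \<and> A n = A (Suc n)) \<or> (A n = A (Suc n) \<and> A (Suc n) = A (Suc (Suc n)))"
proof -
  obtain m where nm: "n = Suc m" using n1 by (cases n) auto
  have hA: "\<forall>k. cadj (A k) = A k" using pos herm by blast
  obtain Ci where Ci: "A m ** Ci = mat 1" using pos unfolding invertible_def by blast
  obtain Bi where Bi: "A (Suc m) ** Bi = mat 1" using pos unfolding invertible_def by blast
  obtain Ei where Ei: "Ei ** A (m+3) = mat 1" using pos unfolding invertible_def by blast
  have eq': "A (Suc (Suc m)) = A (Suc m)" using eq nm by simp
  define B where "B = A (Suc m)"
  define E where "E = A (m+3)"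
  have kw: "B *v (B *v (B *v w)) = E *v (E *v (B *v w))" for w
  proof -
    let ?K = "(norm (A (Suc m) *v (A (Suc m) *v (A (Suc m) *v w)) - A (m+3) *v (A (m+3) *v (A (Suc m) *v w))))^2"
    let ?L = "(norm (A (Suc m) *v (A (Suc m) *v (A (Suc m) *v (A (Suc m) *v w)))))^2
            + (norm (A (m+5) *v (A (m+4) *v (A (m+3) *v (A (Suc m) *v w)))))^2"
    have "?K = 0"
      by (rule small_K[of ?K ?L]) (use key_ineq[OF hA Ci eq' qh] in auto)
    then show ?thesis unfolding B_def E_def by simp
  qed
  have sq: "E *v (E *v u) = B *v (B *v u)" for u
  proof -
    have "B *v (Bi *v u) = u" unfolding B_def by (simp add: matrix_vector_mul_assoc Bi)
    then show ?thesis using kw[of "Bi *v u"] by simp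
  qed
  have "E = B"
    by (rule sqrt_unique[of E B Ei]) (use hA pos Ei sq in \<open>auto simp: E_def B_def\<close>)
  then have "A (Suc (Suc n)) = A (Suc n)" unfolding E_def B_def nm using eq' by (simp add: numeral_3_eq_3)
  then show ?thesis using eq by simp
qed


end
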